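(* Let $\mu,\nu\in\mathcal{P}(\mathcal{X})$, $0<m_1\le m_2<\infty$, $K:\mathcal{X}\times\mathcal{X}\to(0,1]$ measurable with lower decay $l$, and let $(\alpha_1,\tilde\alpha_1)$, $(\alpha_2,\tilde\alpha_2)$ be pairs of tail functions (with $\mu(B_{m_1})>0$, $\nu(B_{m_1})>0$, $\alpha_1,\alpha_2>0$). Assume \begin{align*} &l(m_2)(1-\alpha_1(m_2))-\tilde\alpha_1(m_2)\ge0,\\ &\bar a:=\sup_{r\ge m_1}\big(l(r)\nu(B_r)(1-\alpha_1(r))-\tilde\alpha_1(m_2)\big)>0,\\ &\frac{1+\tilde\alpha_1(m_2)}{\bar a}\,\nu(B_r^{\mathsf c})\le\alpha_2(r)\ \text{ for all } r\ge m_1,\\ &\frac{\tilde\alpha_1(m_2)}{\bar a}\,\nu(B_r^{\mathsf c})\le\tilde\alpha_2(r)\ \text{ for all } r\ge m_2. \end{align*} Then $L_{K,\mu}(\mathcal{F}^{\mu}_{\alpha_1,\tilde\alpha_1})\subseteq\mathcal{F}^{\nu}_{\alpha_2,\tilde\alpha_2}$ and $L_{K^\top,\nu}(\mathcal{G}^{\nu}_{\alpha_2,\tilde\alpha_2})\subseteq\mathcal{G}^{\mu}_{\alpha_1,\tilde\alpha_1}$.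
   Context: $\mathcal{X}$ is a Polish space with metric $d_{\mathcal{X}}$, $x_0$ fixed, $B_r=\{x:d_{\mathcal{X}}(x_0,x)\le r\}$, $B_r^{\mathsf c}=\mathcal{X}\setminus B_r$. A non-increasing $l:[0,\infty)\to[0,\infty)$ is a lower decay of $K$ if $\inf_{x,y\in B_r}K(x,y)\ge l(r)$ for all $r>0$. $K^\top(x,y)=K(y,x)$; $L_{K,\mu}f(x)=\int K(x,y)f(y)\,\mu(dy)$. A tail function is a non-increasing $\alpha:(0,\infty)\to[0,\infty)$ with $\lim_{r\to\infty}\alpha(r)=0$. For $\rho\in\mathcal{P}(\mathcal{X})$: $\mathcal{F}^{\rho}_{\alpha,\tilde\alpha}$ is the set of $f\in L^2(\rho)$ with $f\mathbf 1_{B_{m_2}}\ge0$ $\rho$-a.s., $\int_{B_r^{\mathsf c}}f_+\,d\rho\le\alpha(r)\int f\,d\rho$ for all $r\ge m_1$, $\int_{B_r^{\mathsf c}}f_-\,d\rho\le\tilde\alpha(r)\int f\,d\rho$ for all $r\ge m_2$; $\mathcal{G}^{\rho}_{\alpha,\tilde\alpha}=\{g\in L^2(\rho):\int fg\,d\rho\ge0\ \forall f\in\mathcal{F}^{\rho}_{\alpha,\tilde\alpha}\}$. *)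

theory Defs
  imports "HOL-Probability.Probability"
begin

text \<open>Closed ball B_r around the fixed base point x0: cball x0 r = {x. dist x0 x \<le> r}.
  Its complement is - cball x0 r.\<close>

definition tail_function :: "(real \<Rightarrow> real) \<Rightarrow> bool" where
  "tail_function \<alpha> \<longleftrightarrow>
     (\<forall>r s. 0 < r \<longrightarrow> r \<le> s \<longrightarrow> \<alpha> s \<le> \<alpha> r) \<and>
     (\<forall>r. 0 < r \<longrightarrow> 0 \<le> \<alpha> r) \<and>
     (\<alpha> \<longlongrightarrow> 0) at_top"

definition lower_decay :: "'a::metric_space \<Rightarrow> ('a \<Rightarrow> 'a \<Rightarrow> real) \<Rightarrow> (real \<Rightarrow> real) \<Rightarrow> bool" where
  "lower_decay x0 K l \<longleftrightarrow>
     (\<forall>r s. 0 \<le> r \<longrightarrow> r \<le> s \<longrightarrow> l s \<le> l r) \<and>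
     (\<forall>r. 0 \<le> r \<longrightarrow> 0 \<le> l r) \<and>
     (\<forall>r>0. \<forall>x\<in>cball x0 r. \<forall>y\<in>cball x0 r. l r \<le> K x y)"

definition L2 :: "'a measure \<Rightarrow> ('a \<Rightarrow> real) \<Rightarrow> bool" where
  "L2 \<rho> f \<longleftrightarrow> f \<in> borel_measurable \<rho> \<and> integrable \<rho> (\<lambda>x. (f x)\<^sup>2)"

definition intop :: "('a \<Rightarrow> 'a \<Rightarrow> real) \<Rightarrow> 'a measure \<Rightarrow> ('a \<Rightarrow> real) \<Rightarrow> 'a \<Rightarrow> real" where
  "intop K \<mu> f x = (\<integral>y. K x y * f y \<partial>\<mu>)"

definition Fset :: "'a::metric_space \<Rightarrow> real \<Rightarrow> real \<Rightarrow> 'a measure \<Rightarrow> (real \<Rightarrow> real) \<Rightarrow> (real \<Rightarrow> real)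
    \<Rightarrow> ('a \<Rightarrow> real) set" where
  "Fset x0 m1 m2 \<rho> \<alpha> \<alpha>' = {f. L2 \<rho> f \<and>
     (AE x in \<rho>. x \<in> cball x0 m2 \<longrightarrow> 0 \<le> f x) \<and>
     (\<forall>r\<ge>m1. (LINT x:(- cball x0 r)|\<rho>. max (f x) 0) \<le> \<alpha> r * (\<integral>x. f x \<partial>\<rho>)) \<and>
     (\<forall>r\<ge>m2. (LINT x:(- cball x0 r)|\<rho>. max (- f x) 0) \<le> \<alpha>' r * (\<integral>x. f x \<partial>\<rho>))}"

definition Gset :: "'a::metric_space \<Rightarrow> real \<Rightarrow> real \<Rightarrow> 'a measure \<Rightarrow> (real \<Rightarrow> real) \<Rightarrow> (real \<Rightarrow> real)
    \<Rightarrow> ('a \<Rightarrow> real) set" where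
  "Gset x0 m1 m2 \<rho> \<alpha> \<alpha>' = {g. L2 \<rho> g \<and>
     (\<forall>f\<in>Fset x0 m1 m2 \<rho> \<alpha> \<alpha>'. 0 \<le> (\<integral>x. f x * g x \<partial>\<rho>))}"

end

theory Submission
  imports Defs
begin

lemma meas_borel_iff:
  fixes g :: "'a::topological_space \<Rightarrow> 'b::topological_space"
  assumes "sets M = sets borel"
  shows "g \<in> borel_measurable M \<longleftrightarrow> g \<in> borel_measurable borel"
proof -
  have "(borel_measurable M :: ('a \<Rightarrow> 'b) set) = borel_measurable borel" by (rule measurable_cong_sets[OF assms refl])
  then show ?thesis by simp
qed

lemma intop_meas:
  assumes M: "sigma_finite_measure M" "sets M = sets borel" and N: "sets N = sets borel"
    and K: "(\<lambda>(x, y). K x y) \<in> borel_measurable (borel \<Otimes>\<^sub>M borel)"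
    and f: "f \<in> borel_measurable M"
  shows "intop K M f \<in> borel_measurable N"
proof -
  have fb: "f \<in> borel_measurable borel" using f meas_borel_iff[OF M(2), of f] by simp
  have "(\<lambda>(x, y). K x y * f y) \<in> borel_measurable (borel \<Otimes>\<^sub>M borel)"
  proof -
    have K': "(\<lambda>p. K (fst p) (snd p)) \<in> borel_measurable (borel \<Otimes>\<^sub>M borel)" using K by (simp add: split_beta')
    have f': "(\<lambda>p. f (snd p)) \<in> borel_measurable (borel \<Otimes>\<^sub>M borel)" by (rule measurable_compose[OF measurable_snd fb])
    have "(\<lambda>p. K (fst p) (snd p) * f (snd p)) \<in> borel_measurable (borel \<Otimes>\<^sub>M borel)"
      by (rule borel_measurable_times[OF K' f'])
    then show ?thesis by (simp add: split_beta')
  qed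
  then have "(\<lambda>(x, y). K x y * f y) \<in> borel_measurable (N \<Otimes>\<^sub>M M)"
    using measurable_cong_sets[OF sets_pair_measure_cong[OF N M(2)] refl] by blast
  then show ?thesis unfolding intop_def[abs_def]
    using sigma_finite_measure.borel_measurable_lebesgue_integral[OF M(1)] by blast
qed

lemma Kx_meas:
  assumes K: "(\<lambda>(x, y). K x y) \<in> borel_measurable (borel \<Otimes>\<^sub>M borel)" and M: "sets M = sets borel"
  shows "K x \<in> borel_measurable M" "(\<lambda>y. K y x) \<in> borel_measurable M"
proof -
  have "(\<lambda>y. (\<lambda>(x, y). K x y) (x, y)) \<in> borel_measurable borel"
    by (rule measurable_Pair2[OF K]) simp
  then show "K x \<in> borel_measurable M" using meas_borel_iff[OF M, of "K x"] by simp
  have "(\<lambda>y. (\<lambda>(x, y). K x y) (y, x)) \<in> borel_measurable borel"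
    by (rule measurable_Pair1[OF K]) simp
  then show "(\<lambda>y. K y x) \<in> borel_measurable M" using meas_borel_iff[OF M, of "\<lambda>y. K y x"] by simp
qed

lemma space_borel_eq: "sets M = sets borel \<Longrightarrow> space M = UNIV"
  using sets_eq_imp_space_eq[of M borel] by simp

lemma cball_sets:
  fixes x0 :: "'a::metric_space"
  assumes "sets M = sets borel" shows "cball x0 r \<in> sets M" "- cball x0 r \<in> sets M"
proof -
  have a: "cball x0 r \<in> sets borel" by (rule borel_closed) simp
  then show "cball x0 r \<in> sets M" using assms by simp
  have "- cball x0 r \<in> sets borel" by (rule borel_comp[OF a])
  then show "- cball x0 r \<in> sets M" using assms by simp
qed

lemma pw1: "0 < (k::real) \<Longrightarrow> k \<le> 1 \<Longrightarrow> k * a \<le> max a 0"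
proof (cases "a \<ge> 0")
  case True assume "0 < k" "k \<le> 1" then show ?thesis using True mult_left_le_one_le[of a k] by simp
next
  case False assume "0 < k" then show ?thesis using False mult_pos_neg[of k a] by simp
qed
lemma pw2: "0 < (k::real) \<Longrightarrow> k \<le> 1 \<Longrightarrow> - max (-a) 0 \<le> k * a"
proof (cases "a \<ge> 0")
  case True assume "0 < k" then show ?thesis using True by simp
next
  case False assume "k \<le> 1" then have "0 \<le> (k - 1) * a" using False by (intro mult_nonpos_nonpos) auto
  then show ?thesis using False by (simp add: algebra_simps)
qed
lemma pw3: "0 \<le> (c::real) \<Longrightarrow> c \<le> k \<Longrightarrow> k \<le> 1 \<Longrightarrow> c * max a 0 - max (-a) 0 \<le> k * a"
proof (cases "a \<ge> 0")
  case True assume "c \<le> k" then show ?thesis using True mult_right_mono[of c k a] by simp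
next
  case False assume "k \<le> 1" then have "0 \<le> (k - 1) * a" using False by (intro mult_nonpos_nonpos) auto
  then show ?thesis using False by (simp add: algebra_simps)
qed

lemma ind_integrable:
  assumes M: "finite_measure M" and A: "A \<in> sets M"
  shows "integrable M (\<lambda>x. indicator A x * (c::real))"
proof (rule finite_measure.integrable_const_bound[OF M, where B="\<bar>c\<bar>"])
  show "AE x in M. norm (indicator A x * c) \<le> \<bar>c\<bar>"
    by (rule AE_I2) (simp add: indicator_def)
  show "(\<lambda>x. indicator A x * c) \<in> borel_measurable M"
    by (rule borel_measurable_times[OF borel_measurable_indicator[OF A] borel_measurable_const])
qed

lemma F_map:
  fixes x0 :: "'a::polish_space"
  assumes mu: "prob_space \<mu>" "sets \<mu> = sets borel"
    and nu: "prob_space \<nu>" "sets \<nu> = sets borel"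
    and m: "0 < m1" "m1 \<le> m2"
    and Km: "(\<lambda>(x, y). K x y) \<in> borel_measurable (borel \<Otimes>\<^sub>M borel)"
    and Kb: "\<And>x y. 0 < K x y \<and> K x y \<le> 1"
    and ld: "lower_decay x0 K l"
    and t1': "tail_function \<alpha>1'" and t2': "tail_function \<alpha>2'"
    and a1: "\<And>r. 0 < r \<Longrightarrow> \<alpha>1 r > 0" and a2: "\<And>r. 0 < r \<Longrightarrow> \<alpha>2 r > 0"
    and h1: "l m2 * (1 - \<alpha>1 m2) - \<alpha>1' m2 \<ge> 0"
    and abar_def: "abar = (SUP r\<in>{m1..}. l r * measure \<nu> (cball x0 r) * (1 - \<alpha>1 r) - \<alpha>1' m2)"
    and abar: "abar > 0"
    and h2: "\<And>r. r \<ge> m1 \<Longrightarrow> (1 + \<alpha>1' m2) / abar * measure \<nu> (- cball x0 r) \<le> \<alpha>2 r"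
    and h3: "\<And>r. r \<ge> m2 \<Longrightarrow> \<alpha>1' m2 / abar * measure \<nu> (- cball x0 r) \<le> \<alpha>2' r"
    and f: "f \<in> Fset x0 m1 m2 \<mu> \<alpha>1 \<alpha>1'"
  shows "intop K \<mu> f \<in> Fset x0 m1 m2 \<nu> \<alpha>2 \<alpha>2'"
proof -
  interpret M: prob_space \<mu> by fact
  interpret N: prob_space \<nu> by fact
  have spM: "space \<mu> = UNIV" and spN: "space \<nu> = UNIV" using mu nu space_borel_eq by blast+
  from f have fL2: "L2 \<mu> f" and fAE: "AE x in \<mu>. x \<in> cball x0 m2 \<longrightarrow> 0 \<le> f x"
    and fT: "\<And>r. r \<ge> m1 \<Longrightarrow> (LINT x:(- cball x0 r)|\<mu>. max (f x) 0) \<le> \<alpha>1 r * (\<integral>x. f x \<partial>\<mu>)"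
    and fT': "\<And>r. r \<ge> m2 \<Longrightarrow> (LINT x:(- cball x0 r)|\<mu>. max (- f x) 0) \<le> \<alpha>1' r * (\<integral>x. f x \<partial>\<mu>)"
    unfolding Fset_def by auto
  have fm: "f \<in> borel_measurable \<mu>" using fL2 by (simp add: L2_def)
  have fi: "integrable \<mu> f" using fL2 unfolding L2_def by (blast intro: M.square_integrable_imp_integrable)
  define I where "I = (\<integral>x. f x \<partial>\<mu>)"
  define P where "P = (\<lambda>y. max (f y) 0)"
  define Nf where "Nf = (\<lambda>y. max (- f y) 0)"
  have Pi: "integrable \<mu> P" unfolding P_def using fi by auto
  have Ni: "integrable \<mu> Nf" unfolding Nf_def using fi by auto
  have a1'0: "0 \<le> \<alpha>1' m2" using t1' m unfolding tail_function_def by auto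
  have a2'0: "\<And>r. r \<ge> m2 \<Longrightarrow> 0 \<le> \<alpha>2' r" using t2' m unfolding tail_function_def by auto
  have lpos: "\<And>r. 0 \<le> r \<Longrightarrow> 0 \<le> l r" using ld unfolding lower_decay_def by auto
  have lK: "\<And>r x y. 0 < r \<Longrightarrow> x \<in> cball x0 r \<Longrightarrow> y \<in> cball x0 r \<Longrightarrow> l r \<le> K x y"
    using ld unfolding lower_decay_def by auto
  have I0: "0 \<le> I"
  proof -
    have "0 \<le> (LINT x:(- cball x0 m1)|\<mu>. max (f x) 0)"
      unfolding set_lebesgue_integral_def by (intro Bochner_Integration.integral_nonneg) (auto simp: indicator_def)
    also have "\<dots> \<le> \<alpha>1 m1 * I" using fT[of m1] by (simp add: I_def)
    finally show ?thesis using a1[OF m(1)] by (simp add: zero_le_mult_iff)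
  qed
  have Nint: "(\<integral>y. Nf y \<partial>\<mu>) \<le> \<alpha>1' m2 * I"
  proof -
    have Nm: "Nf \<in> borel_measurable \<mu>" using Ni by auto
    have INm: "(\<lambda>y. indicator (- cball x0 m2) y * Nf y) \<in> borel_measurable \<mu>"
      by (rule borel_measurable_times[OF borel_measurable_indicator[OF cball_sets(2)[OF mu(2)]] Nm])
    have "AE y in \<mu>. Nf y = indicator (- cball x0 m2) y * Nf y"
      using fAE by eventually_elim (auto simp: Nf_def indicator_def)
    then have "(\<integral>y. Nf y \<partial>\<mu>) = (\<integral>y. indicator (- cball x0 m2) y * Nf y \<partial>\<mu>)"
      by (rule integral_cong_AE[OF Nm INm])
    then have "(\<integral>y. Nf y \<partial>\<mu>) = (LINT x:(- cball x0 m2)|\<mu>. max (- f x) 0)"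
      unfolding set_lebesgue_integral_def Nf_def by simp
    then show ?thesis using fT'[of m2] by (simp add: I_def)
  qed
  have N0: "0 \<le> (\<integral>y. Nf y \<partial>\<mu>)" unfolding Nf_def by (intro Bochner_Integration.integral_nonneg) auto
  have fPN: "\<And>y. f y = P y - Nf y" unfolding P_def Nf_def by auto
  have Pint: "(\<integral>y. P y \<partial>\<mu>) = I + (\<integral>y. Nf y \<partial>\<mu>)"
  proof -
    have "I = (\<integral>y. P y - Nf y \<partial>\<mu>)" unfolding I_def by (intro Bochner_Integration.integral_cong) (auto simp: P_def Nf_def)
    then show ?thesis using Pi Ni by simp
  qed
  define g where "g = intop K \<mu> f"
  have Kxm: "\<And>x. K x \<in> borel_measurable \<mu>" using Kx_meas[OF Km mu(2)] by blast
  have Kfi: "integrable \<mu> (\<lambda>y. K x y * f y)" for x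
  proof (rule Bochner_Integration.integrable_bound[OF fi])
    show "(\<lambda>y. K x y * f y) \<in> borel_measurable \<mu>" using Kxm[of x] fm by (rule borel_measurable_times)
    show "AE y in \<mu>. norm (K x y * f y) \<le> norm (f y)"
    proof (rule AE_I2)
      fix y
      have "\<bar>K x y\<bar> \<le> 1" using Kb[of x y] by simp
      then have "\<bar>K x y\<bar> * \<bar>f y\<bar> \<le> \<bar>f y\<bar>" by (simp add: mult_left_le_one_le)
      then show "norm (K x y * f y) \<le> norm (f y)" by (simp add: abs_mult)
    qed
  qed
  have gup: "\<And>x. g x \<le> (1 + \<alpha>1' m2) * I"
  proof -
    fix x
    have "g x \<le> (\<integral>y. P y \<partial>\<mu>)" unfolding g_def intop_def
    proof (rule integral_mono[OF Kfi Pi])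
      fix y show "K x y * f y \<le> P y" using Kb[of x y] unfolding P_def by (intro pw1) auto
    qed
    then show "g x \<le> (1 + \<alpha>1' m2) * I" using Pint Nint by (simp add: algebra_simps)
  qed
  have glow: "\<And>x. - (\<alpha>1' m2 * I) \<le> g x"
  proof -
    fix x
    have "(\<integral>y. - Nf y \<partial>\<mu>) \<le> g x" unfolding g_def intop_def
    proof (rule integral_mono[OF _ Kfi])
      show "integrable \<mu> (\<lambda>y. - Nf y)" using Ni by auto
      fix y show "- Nf y \<le> K x y * f y" using Kb[of x y] unfolding Nf_def by (intro pw2) auto
    qed
    then show "- (\<alpha>1' m2 * I) \<le> g x" using Nint by simp
  qed
  have ginner: "\<And>r x. r \<ge> m1 \<Longrightarrow> x \<in> cball x0 r \<Longrightarrow> (l r * (1 - \<alpha>1 r) - \<alpha>1' m2) * I \<le> g x"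
  proof -
    fix r x assume r: "r \<ge> m1" and x: "x \<in> cball x0 r"
    have r0: "0 < r" using r m by simp
    have iPi: "integrable \<mu> (\<lambda>y. indicator (cball x0 r) y * P y)"
      using integrable_real_mult_indicator[OF cball_sets(1)[OF mu(2)] Pi] by (simp add: mult.commute)
    have "(\<integral>y. l r * (indicator (cball x0 r) y * P y) - Nf y \<partial>\<mu>) \<le> g x" unfolding g_def intop_def
    proof (rule integral_mono[OF _ Kfi])
      show "integrable \<mu> (\<lambda>y. l r * (indicator (cball x0 r) y * P y) - Nf y)" using Ni iPi by auto
      fix y
      show "l r * (indicator (cball x0 r) y * P y) - Nf y \<le> K x y * f y"
      proof (cases "y \<in> cball x0 r")
        case True
        then have "l r \<le> K x y" using lK[OF r0 x] by blast
        then show ?thesis using True Kb[of x y] lpos[of r] r0 unfolding Nf_def P_def by (simp add: pw3)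
      next
        case False
        then show ?thesis using Kb[of x y] unfolding Nf_def P_def by (simp add: pw2)
      qed
    qed
    then have A: "l r * (\<integral>y. indicator (cball x0 r) y * P y \<partial>\<mu>) - (\<integral>y. Nf y \<partial>\<mu>) \<le> g x"
      using iPi Ni by simp
    have "(\<integral>y. indicator (cball x0 r) y * P y \<partial>\<mu>) = (\<integral>y. P y \<partial>\<mu>) - (LINT x:(- cball x0 r)|\<mu>. max (f x) 0)"
    proof -
      have "(\<integral>y. P y \<partial>\<mu>) = (\<integral>y. indicator (cball x0 r) y * P y + indicator (- cball x0 r) y * P y \<partial>\<mu>)"
        by (intro Bochner_Integration.integral_cong) (auto simp: indicator_def)
      also have "\<dots> = (\<integral>y. indicator (cball x0 r) y * P y \<partial>\<mu>) + (\<integral>y. indicator (- cball x0 r) y * P y \<partial>\<mu>)"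
        using iPi integrable_real_mult_indicator[OF cball_sets(2)[OF mu(2)] Pi] by (simp add: mult.commute)
      finally show ?thesis unfolding set_lebesgue_integral_def P_def by simp
    qed
    also have "\<dots> \<ge> (1 - \<alpha>1 r) * I" using fT[OF r] Pint N0 by (simp add: I_def algebra_simps)
    finally have B: "(1 - \<alpha>1 r) * I \<le> (\<integral>y. indicator (cball x0 r) y * P y \<partial>\<mu>)" .
    have "(l r * (1 - \<alpha>1 r) - \<alpha>1' m2) * I = l r * ((1 - \<alpha>1 r) * I) - \<alpha>1' m2 * I"
      by (simp add: algebra_simps)
    also have "\<dots> \<le> l r * (\<integral>y. indicator (cball x0 r) y * P y \<partial>\<mu>) - (\<integral>y. Nf y \<partial>\<mu>)"
      using mult_left_mono[OF B lpos[of r]] r0 Nint by simp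
    finally show "(l r * (1 - \<alpha>1 r) - \<alpha>1' m2) * I \<le> g x" using A by simp
  qed
  have gm: "g \<in> borel_measurable \<nu>" unfolding g_def
    by (rule intop_meas[OF _ mu(2) nu(2) Km fm]) (simp add: M.sigma_finite_measure_axioms)
  have gabs: "\<bar>g x\<bar> \<le> (1 + \<alpha>1' m2) * I" for x
  proof -
    have "\<alpha>1' m2 * I \<le> (1 + \<alpha>1' m2) * I" using I0 by (simp add: mult_right_mono)
    then show ?thesis using gup[of x] glow[of x] by linarith
  qed
  have gi: "integrable \<nu> g"
    by (rule N.integrable_const_bound[where B="(1 + \<alpha>1' m2) * I"]) (use gabs gm in auto)
  have g2i: "integrable \<nu> (\<lambda>x. (g x)\<^sup>2)"
  proof (rule N.integrable_const_bound[where B="((1 + \<alpha>1' m2) * I)\<^sup>2"])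
    show "AE x in \<nu>. norm ((g x)\<^sup>2) \<le> ((1 + \<alpha>1' m2) * I)\<^sup>2"
    proof (rule AE_I2)
      fix x
      have "\<bar>g x\<bar>\<^sup>2 \<le> ((1 + \<alpha>1' m2) * I)\<^sup>2" by (rule power_mono[OF gabs abs_ge_zero])
      then show "norm ((g x)\<^sup>2) \<le> ((1 + \<alpha>1' m2) * I)\<^sup>2" by simp
    qed
  qed (use gm in auto)
  have key: "abar * I \<le> (\<integral>x. g x \<partial>\<nu>)"
  proof -
    have v: "(l r * measure \<nu> (cball x0 r) * (1 - \<alpha>1 r) - \<alpha>1' m2) * I \<le> (\<integral>x. g x \<partial>\<nu>)" if r: "r \<ge> m1" for r
    proof -
      have "(\<integral>x. indicator (cball x0 r) x * ((l r * (1 - \<alpha>1 r)) * I) - \<alpha>1' m2 * I \<partial>\<nu>) \<le> (\<integral>x. g x \<partial>\<nu>)"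
      proof (rule integral_mono[OF _ gi])
        show "integrable \<nu> (\<lambda>x. indicator (cball x0 r) x * ((l r * (1 - \<alpha>1 r)) * I) - \<alpha>1' m2 * I)"
          using ind_integrable[OF N.finite_measure_axioms cball_sets(1)[OF nu(2)]] by (intro Bochner_Integration.integrable_diff) auto
        fix x show "indicator (cball x0 r) x * ((l r * (1 - \<alpha>1 r)) * I) - \<alpha>1' m2 * I \<le> g x"
        proof (cases "x \<in> cball x0 r")
          case True then show ?thesis using ginner[OF r True] by (simp add: left_diff_distrib)
        next
          case False then show ?thesis using glow[of x] by simp
        qed
      qed
      moreover have "(\<integral>x. indicator (cball x0 r) x * ((l r * (1 - \<alpha>1 r)) * I) - \<alpha>1' m2 * I \<partial>\<nu>)
          = measure \<nu> (cball x0 r) * ((l r * (1 - \<alpha>1 r)) * I) - \<alpha>1' m2 * I"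
        using ind_integrable[OF N.finite_measure_axioms cball_sets(1)[OF nu(2)], of x0 r "l r * (1 - \<alpha>1 r) * I"] N.prob_space
        by (subst Bochner_Integration.integral_diff) (auto simp: spN)
      ultimately show ?thesis by (simp add: algebra_simps)
    qed
    show ?thesis
    proof (cases "I = 0")
      case True then show ?thesis using v[of m1] by simp
    next
      case False
      then have Ip: "I > 0" using I0 by simp
      have "abar \<le> (\<integral>x. g x \<partial>\<nu>) / I" unfolding abar_def
      proof (rule cSUP_least)
        show "{m1..} \<noteq> {}" by simp
        fix r assume "r \<in> {m1..}"
        then show "l r * measure \<nu> (cball x0 r) * (1 - \<alpha>1 r) - \<alpha>1' m2 \<le> (\<integral>x. g x \<partial>\<nu>) / I"
          using v[of r] Ip by (simp add: pos_le_divide_eq)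
      qed
      then show ?thesis using Ip by (simp add: pos_le_divide_eq mult.commute)
    qed
  qed
  have T1: "(LINT x:(- cball x0 r)|\<nu>. max (g x) 0) \<le> \<alpha>2 r * (\<integral>x. g x \<partial>\<nu>)" if r: "r \<ge> m1" for r
  proof -
    have "(LINT x:(- cball x0 r)|\<nu>. max (g x) 0) \<le> (\<integral>x. indicator (- cball x0 r) x * ((1 + \<alpha>1' m2) * I) \<partial>\<nu>)"
      unfolding set_lebesgue_integral_def
    proof (rule integral_mono)
      show "integrable \<nu> (\<lambda>x. indicator (- cball x0 r) x *\<^sub>R max (g x) 0)"
        using integrable_mult_indicator[OF cball_sets(2)[OF nu(2)], of "\<lambda>x. max (g x) 0"] gi by auto
      show "integrable \<nu> (\<lambda>x. indicator (- cball x0 r) x * ((1 + \<alpha>1' m2) * I))"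
        using ind_integrable[OF N.finite_measure_axioms cball_sets(2)[OF nu(2)]] by auto
      fix x show "indicator (- cball x0 r) x *\<^sub>R max (g x) 0 \<le> indicator (- cball x0 r) x * ((1 + \<alpha>1' m2) * I)"
        using gup[of x] a1'0 I0 by (auto simp: indicator_def)
    qed
    also have "\<dots> = (1 + \<alpha>1' m2) / abar * measure \<nu> (- cball x0 r) * (abar * I)"
      using abar by (simp add: spN)
    also have "\<dots> \<le> \<alpha>2 r * (abar * I)"
      using h2[OF r] abar I0 by (intro mult_right_mono) auto
    also have "\<dots> \<le> \<alpha>2 r * (\<integral>x. g x \<partial>\<nu>)"
      using key a2[of r] r m by (intro mult_left_mono) auto
    finally show ?thesis .
  qed
  have T2: "(LINT x:(- cball x0 r)|\<nu>. max (- g x) 0) \<le> \<alpha>2' r * (\<integral>x. g x \<partial>\<nu>)" if r: "r \<ge> m2" for r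
  proof -
    have "(LINT x:(- cball x0 r)|\<nu>. max (- g x) 0) \<le> (\<integral>x. indicator (- cball x0 r) x * (\<alpha>1' m2 * I) \<partial>\<nu>)"
      unfolding set_lebesgue_integral_def
    proof (rule integral_mono)
      show "integrable \<nu> (\<lambda>x. indicator (- cball x0 r) x *\<^sub>R max (- g x) 0)"
        using integrable_mult_indicator[OF cball_sets(2)[OF nu(2)], of "\<lambda>x. max (- g x) 0"] gi by auto
      show "integrable \<nu> (\<lambda>x. indicator (- cball x0 r) x * (\<alpha>1' m2 * I))"
        using ind_integrable[OF N.finite_measure_axioms cball_sets(2)[OF nu(2)]] by auto
      fix x show "indicator (- cball x0 r) x *\<^sub>R max (- g x) 0 \<le> indicator (- cball x0 r) x * (\<alpha>1' m2 * I)"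
        using glow[of x] a1'0 I0 by (auto simp: indicator_def)
    qed
    also have "\<dots> = \<alpha>1' m2 / abar * measure \<nu> (- cball x0 r) * (abar * I)"
      using abar by (simp add: spN)
    also have "\<dots> \<le> \<alpha>2' r * (abar * I)"
      using h3[OF r] abar I0 by (intro mult_right_mono) auto
    also have "\<dots> \<le> \<alpha>2' r * (\<integral>x. g x \<partial>\<nu>)"
      using key a2'0[OF r] by (intro mult_left_mono) auto
    finally show ?thesis .
  qed
  have pos: "AE x in \<nu>. x \<in> cball x0 m2 \<longrightarrow> 0 \<le> g x"
  proof (rule AE_I2, rule impI)
    fix x assume "x \<in> cball x0 m2"
    from ginner[OF m(2) this] mult_nonneg_nonneg[OF h1 I0] show "0 \<le> g x" by linarith
  qed
  have L: "L2 \<nu> g" using gm g2i by (simp add: L2_def)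
  show ?thesis unfolding g_def[symmetric] Fset_def mem_Collect_eq
    by (intro conjI L pos allI impI T1 T2)
qed


lemma KT_meas:
  assumes Km: "(\<lambda>(x, y). K x y) \<in> borel_measurable (borel \<Otimes>\<^sub>M borel)"
  shows "(\<lambda>(x, y). K y x) \<in> borel_measurable (borel \<Otimes>\<^sub>M borel)"
proof -
  have "(\<lambda>(x, y). K x y) \<circ> (\<lambda>(x, y). (y, x)) \<in> borel_measurable (borel \<Otimes>\<^sub>M borel)"
    by (rule measurable_comp[OF measurable_pair_swap' Km])
  moreover have "(\<lambda>(x, y). K x y) \<circ> (\<lambda>(x, y). (y, x)) = (\<lambda>(x, y). K y x)"
    by (auto simp: fun_eq_iff)
  ultimately show ?thesis by simp
qed

theorem proposition4p1:
  fixes x0 :: "'a::polish_space"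
    and \<mu> \<nu> :: "'a measure"
    and m1 m2 :: real
    and K :: "'a \<Rightarrow> 'a \<Rightarrow> real"
    and l \<alpha>1 \<alpha>1' \<alpha>2 \<alpha>2' :: "real \<Rightarrow> real"
    and abar :: real
  assumes "prob_space \<mu>" "sets \<mu> = sets borel"
    and "prob_space \<nu>" "sets \<nu> = sets borel"
    and "0 < m1" "m1 \<le> m2"
    and "(\<lambda>(x, y). K x y) \<in> borel_measurable (borel \<Otimes>\<^sub>M borel)"
    and "\<And>x y. 0 < K x y \<and> K x y \<le> 1"
    and "lower_decay x0 K l"
    and "tail_function \<alpha>1" "tail_function \<alpha>1'"
    and "tail_function \<alpha>2" "tail_function \<alpha>2'"
    and "measure \<mu> (cball x0 m1) > 0" "measure \<nu> (cball x0 m1) > 0"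
    and "\<And>r. 0 < r \<Longrightarrow> \<alpha>1 r > 0" "\<And>r. 0 < r \<Longrightarrow> \<alpha>2 r > 0"
    and "l m2 * (1 - \<alpha>1 m2) - \<alpha>1' m2 \<ge> 0"
    and abar_def: "abar = (SUP r\<in>{m1..}. l r * measure \<nu> (cball x0 r) * (1 - \<alpha>1 r) - \<alpha>1' m2)"
    and "abar > 0"
    and "\<And>r. r \<ge> m1 \<Longrightarrow> (1 + \<alpha>1' m2) / abar * measure \<nu> (- cball x0 r) \<le> \<alpha>2 r"
    and "\<And>r. r \<ge> m2 \<Longrightarrow> \<alpha>1' m2 / abar * measure \<nu> (- cball x0 r) \<le> \<alpha>2' r"
  shows "intop K \<mu> ` Fset x0 m1 m2 \<mu> \<alpha>1 \<alpha>1' \<subseteq> Fset x0 m1 m2 \<nu> \<alpha>2 \<alpha>2' \<and>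
         intop (\<lambda>x y. K y x) \<nu> ` Gset x0 m1 m2 \<nu> \<alpha>2 \<alpha>2' \<subseteq> Gset x0 m1 m2 \<mu> \<alpha>1 \<alpha>1'"
proof -
  note A = assms
  have FM: "intop K \<mu> f \<in> Fset x0 m1 m2 \<nu> \<alpha>2 \<alpha>2'" if "f \<in> Fset x0 m1 m2 \<mu> \<alpha>1 \<alpha>1'" for f
    by (rule F_map[OF A(1-9) A(11) A(13) A(16) A(17) A(18) A(19) A(20) A(21) A(22) that])
  interpret M: prob_space \<mu> by (rule A(1))
  interpret N: prob_space \<nu> by (rule A(3))
  have Km: "(\<lambda>(x, y). K x y) \<in> borel_measurable (borel \<Otimes>\<^sub>M borel)" by (rule A(7))
  have KTm: "(\<lambda>(x, y). K y x) \<in> borel_measurable (borel \<Otimes>\<^sub>M borel)" by (rule KT_meas[OF Km])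
  have Kb: "\<And>x y. \<bar>K x y\<bar> \<le> 1" using A(8) by (simp add: abs_le_iff) (smt (verit) A(8))
  have G: "intop (\<lambda>x y. K y x) \<nu> h \<in> Gset x0 m1 m2 \<mu> \<alpha>1 \<alpha>1'" if h: "h \<in> Gset x0 m1 m2 \<nu> \<alpha>2 \<alpha>2'" for h
  proof -
    from h have hL2: "L2 \<nu> h" and hs: "\<And>f. f \<in> Fset x0 m1 m2 \<nu> \<alpha>2 \<alpha>2' \<Longrightarrow> 0 \<le> (\<integral>x. f x * h x \<partial>\<nu>)"
      unfolding Gset_def by auto
    have hm: "h \<in> borel_measurable \<nu>" using hL2 by (simp add: L2_def)
    have hi: "integrable \<nu> h" using hL2 unfolding L2_def by (blast intro: N.square_integrable_imp_integrable)
    have hb: "h \<in> borel_measurable borel" using hm meas_borel_iff[OF A(4), of h] by simp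
    define G where "G = intop (\<lambda>x y. K y x) \<nu> h"
    have KTx: "(\<lambda>y. K y x) \<in> borel_measurable \<nu>" for x using Kx_meas(2)[OF Km A(4)] by blast
    have Khi: "integrable \<nu> (\<lambda>y. K y x * h y)" for x
    proof (rule Bochner_Integration.integrable_bound[OF hi])
      show "(\<lambda>y. K y x * h y) \<in> borel_measurable \<nu>" using KTx[of x] hm by (rule borel_measurable_times)
      show "AE y in \<nu>. norm (K y x * h y) \<le> norm (h y)"
      proof (rule AE_I2)
        fix y
        have "\<bar>K y x\<bar> * \<bar>h y\<bar> \<le> \<bar>h y\<bar>" using Kb[of y x] by (simp add: mult_left_le_one_le)
        then show "norm (K y x * h y) \<le> norm (h y)" by (simp add: abs_mult)
      qed
    qed
    define C where "C = (\<integral>y. \<bar>h y\<bar> \<partial>\<nu>)"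
    have Gb: "\<bar>G x\<bar> \<le> C" for x
    proof -
      have "\<bar>G x\<bar> \<le> (\<integral>y. norm (K y x * h y) \<partial>\<nu>)" unfolding G_def intop_def
        using integral_norm_bound[of \<nu> "\<lambda>y. K y x * h y"] by simp
      also have "\<dots> \<le> C" unfolding C_def
      proof (rule integral_mono)
        show "integrable \<nu> (\<lambda>y. norm (K y x * h y))" using Khi[of x] by (rule integrable_norm)
        show "integrable \<nu> (\<lambda>y. \<bar>h y\<bar>)" using hi by (rule integrable_abs)
        fix y
        have "\<bar>K y x\<bar> * \<bar>h y\<bar> \<le> \<bar>h y\<bar>" using Kb[of y x] by (simp add: mult_left_le_one_le)
        then show "norm (K y x * h y) \<le> \<bar>h y\<bar>" by (simp add: abs_mult)
      qed
      finally show ?thesis .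
    qed
    have Gm: "G \<in> borel_measurable \<mu>" unfolding G_def
      by (rule intop_meas[OF N.sigma_finite_measure_axioms A(4) A(2) KTm hm])
    have G2i: "integrable \<mu> (\<lambda>x. (G x)\<^sup>2)"
    proof (rule M.integrable_const_bound[where B="C\<^sup>2"])
      show "AE x in \<mu>. norm ((G x)\<^sup>2) \<le> C\<^sup>2"
      proof (rule AE_I2)
        fix x
        have "\<bar>G x\<bar>\<^sup>2 \<le> C\<^sup>2" by (rule power_mono[OF Gb abs_ge_zero])
        then show "norm ((G x)\<^sup>2) \<le> C\<^sup>2" by simp
      qed
    qed (use Gm in auto)
    have GL2: "L2 \<mu> G" using Gm G2i by (simp add: L2_def)
    have Gpos: "0 \<le> (\<integral>x. f x * G x \<partial>\<mu>)" if f: "f \<in> Fset x0 m1 m2 \<mu> \<alpha>1 \<alpha>1'" for f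
    proof -
      have fL2: "L2 \<mu> f" using f unfolding Fset_def by auto
      have fm: "f \<in> borel_measurable \<mu>" using fL2 by (simp add: L2_def)
      have fi: "integrable \<mu> f" using fL2 unfolding L2_def by (blast intro: M.square_integrable_imp_integrable)
      have fb: "f \<in> borel_measurable borel" using fm meas_borel_iff[OF A(2), of f] by simp
      interpret P: pair_sigma_finite \<mu> \<nu>
        unfolding pair_sigma_finite_def using M.sigma_finite_measure_axioms N.sigma_finite_measure_axioms by blast
      have sets_eq: "sets (\<mu> \<Otimes>\<^sub>M \<nu>) = sets (borel \<Otimes>\<^sub>M borel)"
        by (rule sets_pair_measure_cong[OF A(2) A(4)])
      have F0m: "(\<lambda>p. f (fst p) * (K (snd p) (fst p) * h (snd p))) \<in> borel_measurable (\<mu> \<Otimes>\<^sub>M \<nu>)"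
      proof -
        have a: "(\<lambda>p. f (fst p)) \<in> borel_measurable (borel \<Otimes>\<^sub>M borel)" by (rule measurable_compose[OF measurable_fst fb])
        have b: "(\<lambda>p. h (snd p)) \<in> borel_measurable (borel \<Otimes>\<^sub>M borel)" by (rule measurable_compose[OF measurable_snd hb])
        have c: "(\<lambda>p. K (snd p) (fst p)) \<in> borel_measurable (borel \<Otimes>\<^sub>M borel)" using KTm by (simp add: split_beta')
        have "(\<lambda>p. f (fst p) * (K (snd p) (fst p) * h (snd p))) \<in> borel_measurable (borel \<Otimes>\<^sub>M borel)"
          by (rule borel_measurable_times[OF a borel_measurable_times[OF c b]])
        then show ?thesis using measurable_cong_sets[OF sets_eq refl] by blast
      qed
      have B0m: "(\<lambda>p. \<bar>f (fst p)\<bar> * \<bar>h (snd p)\<bar>) \<in> borel_measurable (\<mu> \<Otimes>\<^sub>M \<nu>)"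
      proof -
        have a: "(\<lambda>p. f (fst p)) \<in> borel_measurable (borel \<Otimes>\<^sub>M borel)" by (rule measurable_compose[OF measurable_fst fb])
        have b: "(\<lambda>p. h (snd p)) \<in> borel_measurable (borel \<Otimes>\<^sub>M borel)" by (rule measurable_compose[OF measurable_snd hb])
        have "(\<lambda>p. \<bar>f (fst p)\<bar> * \<bar>h (snd p)\<bar>) \<in> borel_measurable (borel \<Otimes>\<^sub>M borel)"
          by (rule borel_measurable_times[OF borel_measurable_abs[OF a] borel_measurable_abs[OF b]])
        then show ?thesis using measurable_cong_sets[OF sets_eq refl] by blast
      qed
      have B0i: "integrable (\<mu> \<Otimes>\<^sub>M \<nu>) (\<lambda>p. \<bar>f (fst p)\<bar> * \<bar>h (snd p)\<bar>)"
      proof (rule P.Fubini_integrable[OF B0m])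
        have "(\<lambda>x. \<integral>y. norm (\<bar>f (fst (x, y))\<bar> * \<bar>h (snd (x, y))\<bar>) \<partial>\<nu>) = (\<lambda>x. \<bar>f x\<bar> * C)"
          unfolding C_def by (simp add: abs_mult)
        moreover have "integrable \<mu> (\<lambda>x. \<bar>f x\<bar> * C)" using fi by (intro integrable_mult_left integrable_abs)
        ultimately show "integrable \<mu> (\<lambda>x. \<integral>y. norm (\<bar>f (fst (x, y))\<bar> * \<bar>h (snd (x, y))\<bar>) \<partial>\<nu>)" by simp
        show "AE x in \<mu>. integrable \<nu> (\<lambda>y. \<bar>f (fst (x, y))\<bar> * \<bar>h (snd (x, y))\<bar>)"
          using hi by (intro AE_I2) (simp add: integrable_mult_right integrable_abs)
      qed
      have F0i: "integrable (\<mu> \<Otimes>\<^sub>M \<nu>) (\<lambda>(x, y). f x * (K y x * h y))"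
      proof -
        have "integrable (\<mu> \<Otimes>\<^sub>M \<nu>) (\<lambda>p. f (fst p) * (K (snd p) (fst p) * h (snd p)))"
        proof (rule Bochner_Integration.integrable_bound[OF B0i F0m])
          show "AE p in \<mu> \<Otimes>\<^sub>M \<nu>. norm (f (fst p) * (K (snd p) (fst p) * h (snd p))) \<le> norm (\<bar>f (fst p)\<bar> * \<bar>h (snd p)\<bar>)"
          proof (rule AE_I2)
            fix p
            have "\<bar>K (snd p) (fst p)\<bar> * \<bar>h (snd p)\<bar> \<le> \<bar>h (snd p)\<bar>"
              using Kb[of "snd p" "fst p"] by (simp add: mult_left_le_one_le)
            then have "\<bar>f (fst p)\<bar> * (\<bar>K (snd p) (fst p)\<bar> * \<bar>h (snd p)\<bar>) \<le> \<bar>f (fst p)\<bar> * \<bar>h (snd p)\<bar>"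
              by (rule mult_left_mono) simp
            then show "norm (f (fst p) * (K (snd p) (fst p) * h (snd p))) \<le> norm (\<bar>f (fst p)\<bar> * \<bar>h (snd p)\<bar>)"
              by (simp add: abs_mult)
          qed
        qed
        then show ?thesis by (simp add: split_beta')
      qed
      have "(\<integral>x. f x * G x \<partial>\<mu>) = (\<integral>x. (\<integral>y. f x * (K y x * h y) \<partial>\<nu>) \<partial>\<mu>)"
        unfolding G_def intop_def by simp
      also have "\<dots> = (\<integral>y. (\<integral>x. f x * (K y x * h y) \<partial>\<mu>) \<partial>\<nu>)"
        by (rule P.Fubini_integral[OF F0i, symmetric])
      also have "\<dots> = (\<integral>y. intop K \<mu> f y * h y \<partial>\<nu>)" unfolding intop_def
      proof (rule Bochner_Integration.integral_cong[OF refl])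
        fix y
        have "(\<integral>x. f x * (K y x * h y) \<partial>\<mu>) = (\<integral>x. K y x * f x * h y \<partial>\<mu>)"
          by (rule Bochner_Integration.integral_cong[OF refl]) (simp add: algebra_simps)
        also have "\<dots> = (\<integral>x. K y x * f x \<partial>\<mu>) * h y" by simp
        finally show "(\<integral>x. f x * (K y x * h y) \<partial>\<mu>) = (\<integral>x. K y x * f x \<partial>\<mu>) * h y" .
      qed
      finally show ?thesis using hs[OF FM[OF f]] by simp
    qed
    show ?thesis unfolding G_def[symmetric] Gset_def mem_Collect_eq
      using GL2 Gpos by blast
  qed
  show ?thesis using FM G by blast
qed

end
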